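(* Let $s\in(0,1)$ and let $E\subset\mathbb{R}^n$ be a set of locally finite $s$-perimeter. Then \[ \partial^-E=\{x\in\mathbb{R}^n: P_s^L(E,B_r(x))>0 \text{ for every } r>0\}. \]
   Context: $\mathcal L_s(A,B):=\int_A\int_B|x-y|^{-n-s}dx\,dy$; $P_s^L(E,\Omega):=\mathcal L_s(E\cap\Omega,E^c\cap\Omega)$; $P_s(E,\Omega):=P_s^L(E,\Omega)+\mathcal L_s(E\cap\Omega,E^c\setminus\Omega)+\mathcal L_s(E\setminus\Omega,E^c\cap\Omega)$. $E$ has locally finite $s$-perimeter if $P_s(E,\Omega)<\infty$ for every bounded open $\Omega$. The measure theoretic boundary is $\partial^-E:=\{x: 0<|E\cap B_r(x)|<\omega_nr^n\ \forall r>0\}$, where $\omega_n=|B_1|$. *)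

theory Defs
  imports "HOL-Analysis.Analysis"
begin

definition Ls :: "real \<Rightarrow> 'a::euclidean_space set \<Rightarrow> 'a set \<Rightarrow> ennreal" where
  "Ls s A B = (\<integral>\<^sup>+ x. (\<integral>\<^sup>+ y. indicator A x * indicator B y *
      ennreal (norm (x - y) powr (- (real DIM('a) + s))) \<partial>lebesgue) \<partial>lebesgue)"

definition PsL :: "real \<Rightarrow> 'a::euclidean_space set \<Rightarrow> 'a set \<Rightarrow> ennreal" where
  "PsL s E \<Omega> = Ls s (E \<inter> \<Omega>) (- E \<inter> \<Omega>)"

definition Ps :: "real \<Rightarrow> 'a::euclidean_space set \<Rightarrow> 'a set \<Rightarrow> ennreal" where
  "Ps s E \<Omega> = PsL s E \<Omega> + Ls s (E \<inter> \<Omega>) (- E - \<Omega>) + Ls s (E - \<Omega>) (- E \<inter> \<Omega>)"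

definition locally_finite_sper :: "real \<Rightarrow> 'a::euclidean_space set \<Rightarrow> bool" where
  "locally_finite_sper s E \<longleftrightarrow> (\<forall>\<Omega>. open \<Omega> \<and> bounded \<Omega> \<longrightarrow> Ps s E \<Omega> < \<infinity>)"

definition omega_n :: "'a::euclidean_space itself \<Rightarrow> real" where
  "omega_n _ = measure lebesgue (ball (0::'a) 1)"

definition meas_boundary :: "'a::euclidean_space set \<Rightarrow> 'a set" where
  "meas_boundary E = {x. \<forall>r>0. 0 < emeasure lebesgue (E \<inter> ball x r) \<and>
      emeasure lebesgue (E \<inter> ball x r) < ennreal (omega_n TYPE('a) * r ^ DIM('a))}"

end

theory Submission
  imports Defs
begin

lemma singleton_null_leb: "{x::'a::euclidean_space} \<in> null_sets lebesgue"
  by (metis countable_finite countable_imp_null_set_lborel finite.emptyI finite_insert null_sets_completionI)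

lemma exists_ball_pos:
  fixes A :: "'a::euclidean_space set"
  assumes A: "A \<in> sets lebesgue" and pos: "0 < emeasure lebesgue A"
  shows "\<exists>R>0. 0 < emeasure lebesgue (A \<inter> ball 0 R)"
proof (rule ccontr)
  assume "\<not> ?thesis"
  hence z: "\<And>n::nat. emeasure lebesgue (A \<inter> ball 0 (real (Suc n))) = 0"
    by (metis not_gr_zero of_nat_0_less_iff zero_less_Suc)
  have "A = (\<Union>n. A \<inter> ball 0 (real (Suc n)))"
  proof
    show "A \<subseteq> (\<Union>n. A \<inter> ball 0 (real (Suc n)))"
    proof
      fix x assume "x \<in> A"
      obtain n :: nat where "norm x < real n" using reals_Archimedean2 by blast
      hence "x \<in> A \<inter> ball 0 (real (Suc n))" using \<open>x \<in> A\<close> by auto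
      thus "x \<in> (\<Union>n. A \<inter> ball 0 (real (Suc n)))" by blast
    qed
  qed auto
  moreover have "(\<Union>n. A \<inter> ball 0 (real (Suc n))) \<in> null_sets lebesgue"
    using z A by (intro null_sets_UN) (auto simp: null_sets_def)
  ultimately show False using pos by (metis null_setsD1 order_less_irrefl)
qed

lemma Ls_pos_iff:
  fixes A B :: "'a::euclidean_space set"
  assumes A: "A \<in> sets lebesgue" and B: "B \<in> sets lebesgue" and s: "0 \<le> s"
  shows "0 < Ls s A B \<longleftrightarrow> 0 < emeasure lebesgue A \<and> 0 < emeasure lebesgue B"
proof
  assume h: "0 < Ls s A B"
  show "0 < emeasure lebesgue A \<and> 0 < emeasure lebesgue B"
  proof (rule ccontr)
    assume "\<not> ?thesis"
    hence "A \<in> null_sets lebesgue \<or> B \<in> null_sets lebesgue"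
      using A B by (auto simp: null_sets_def)
    hence "Ls s A B = 0"
    proof
      assume N: "A \<in> null_sets lebesgue"
      have "AE x in lebesgue. x \<notin> A" using N by (rule AE_not_in)
      hence "Ls s A B = (\<integral>\<^sup>+ (x::'a). 0 \<partial>lebesgue)" unfolding Ls_def
        by (rule nn_integral_cong_AE[OF eventually_mono]) (simp add: indicator_def)
      thus ?thesis by simp
    next
      assume N: "B \<in> null_sets lebesgue"
      have "AE y in lebesgue. y \<notin> B" using N by (rule AE_not_in)
      hence "\<And>x. (\<integral>\<^sup>+ y. indicator A x * indicator B y *
      ennreal (norm (x - y) powr (- (real DIM('a) + s))) \<partial>lebesgue) = (\<integral>\<^sup>+ (y::'a). 0 \<partial>lebesgue)"
        by (rule nn_integral_cong_AE[OF eventually_mono]) (simp add: indicator_def)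
      thus ?thesis unfolding Ls_def by simp
    qed
    thus False using h by simp
  qed
next
  assume h: "0 < emeasure lebesgue A \<and> 0 < emeasure lebesgue B"
  obtain R1 where R1: "R1 > 0" "0 < emeasure lebesgue (A \<inter> ball 0 R1)"
    using exists_ball_pos[OF A] h by blast
  obtain R2 where R2: "R2 > 0" "0 < emeasure lebesgue (B \<inter> ball 0 R2)"
    using exists_ball_pos[OF B] h by blast
  define R where "R = max R1 R2"
  define A' where "A' = A \<inter> ball 0 R"
  define B' where "B' = B \<inter> ball 0 R"
  have A'm: "A' \<in> sets lebesgue" and B'm: "B' \<in> sets lebesgue"
    using A B by (auto simp: A'_def B'_def)
  have "A \<inter> ball 0 R1 \<subseteq> A \<inter> ball 0 R" by (auto simp: R_def)
  hence "emeasure lebesgue (A \<inter> ball 0 R1) \<le> emeasure lebesgue (A \<inter> ball 0 R)"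
    using A by (intro emeasure_mono) auto
  hence "0 < emeasure lebesgue (A \<inter> ball 0 R)" using R1(2) by (rule order_less_le_trans[rotated])
  hence mA: "0 < emeasure lebesgue A'" by (simp add: A'_def)
  have "B \<inter> ball 0 R2 \<subseteq> B \<inter> ball 0 R" by (auto simp: R_def)
  hence "emeasure lebesgue (B \<inter> ball 0 R2) \<le> emeasure lebesgue (B \<inter> ball 0 R)"
    using B by (intro emeasure_mono) auto
  hence "0 < emeasure lebesgue (B \<inter> ball 0 R)" using R2(2) by (rule order_less_le_trans[rotated])
  hence mB: "0 < emeasure lebesgue B'" by (simp add: B'_def)
  have Rp: "R > 0" using R1 by (simp add: R_def)
  define c where "c = (2*R) powr (- (real DIM('a) + s))"
  have cp: "c > 0" using Rp by (simp add: c_def)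
  have inner: "ennreal c * emeasure lebesgue B' * indicator A' x \<le>
     (\<integral>\<^sup>+ y. indicator A x * indicator B y *
      ennreal (norm (x - y) powr (- (real DIM('a) + s))) \<partial>lebesgue)" for x
  proof -
    have eq: "emeasure lebesgue (B' - {x}) = emeasure lebesgue B'"
      using B'm singleton_null_leb by (rule emeasure_Diff_null_set[rotated])
    have "ennreal c * indicator A' x * emeasure lebesgue (B' - {x}) =
       (\<integral>\<^sup>+ y. (ennreal c * indicator A' x) * indicator (B' - {x}) y \<partial>lebesgue)"
      using B'm by (subst nn_integral_cmult_indicator) auto
    also have "\<dots> \<le> (\<integral>\<^sup>+ y. indicator A x * indicator B y *
      ennreal (norm (x - y) powr (- (real DIM('a) + s))) \<partial>lebesgue)"
    proof (rule nn_integral_mono)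
      fix y
      show "ennreal c * indicator A' x * indicator (B' - {x}) y \<le> indicator A x * indicator B y *
      ennreal (norm (x - y) powr (- (real DIM('a) + s)))"
      proof (cases "x \<in> A' \<and> y \<in> B' - {x}")
        case True
        hence xy: "x \<in> A" "y \<in> B" "norm x < R" "norm y < R" "x \<noteq> y"
          by (auto simp: A'_def B'_def)
        have "norm (x - y) \<le> norm x + norm y" by (rule norm_triangle_ineq4)
        hence le: "norm (x - y) \<le> 2*R" using xy by simp
        have "0 < norm (x - y)" using xy by simp
        hence "c \<le> norm (x - y) powr (- (real DIM('a) + s))"
          unfolding c_def using le
          by (intro powr_mono2') (use s in auto)
        thus ?thesis using True xy by (auto simp: A'_def B'_def)
      qed (auto)
    qed
    finally show ?thesis using eq by (simp add: mult_ac)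
  qed
  have "ennreal c * emeasure lebesgue B' * emeasure lebesgue A' =
     (\<integral>\<^sup>+ x. ennreal c * emeasure lebesgue B' * indicator A' x \<partial>lebesgue)"
    using A'm by (simp add: nn_integral_cmult_indicator)
  also have "\<dots> \<le> Ls s A B" unfolding Ls_def by (rule nn_integral_mono) (rule inner)
  finally have le: "ennreal c * emeasure lebesgue B' * emeasure lebesgue A' \<le> Ls s A B" .
  have "0 < ennreal c * emeasure lebesgue B' * emeasure lebesgue A'"
    using cp mA mB by (simp add: ennreal_zero_less_mult_iff)
  thus "0 < Ls s A B" using le by (rule order_less_le_trans)
qed

theorem lemma3p1:
  fixes s :: real and E :: "'a::euclidean_space set"
  assumes "0 < s" and "s < 1"
    and "E \<in> sets lebesgue"
    and "locally_finite_sper s E"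
  shows "meas_boundary E = {x. \<forall>r>0. PsL s E (ball x r) > 0}"
proof -
  have key: "(0 < emeasure lebesgue (E \<inter> ball x r) \<and>
      emeasure lebesgue (E \<inter> ball x r) < ennreal (omega_n TYPE('a) * r ^ DIM('a)))
      \<longleftrightarrow> PsL s E (ball x r) > 0" if r: "r > 0" for x r
  proof -
    have "ball x r - E \<in> sets lebesgue" using assms(3) by auto
    moreover have "ball x r - E = - E \<inter> ball x r" by auto
    ultimately have Em: "E \<inter> ball x r \<in> sets lebesgue" "- E \<inter> ball x r \<in> sets lebesgue"
      using assms(3) by auto
    have fin1: "emeasure lebesgue (ball (0::'a) 1) < \<infinity>"
      using emeasure_lborel_ball_finite[of "0::'a" 1] by simp
    have "ennreal (omega_n TYPE('a) * r ^ DIM('a)) = emeasure lebesgue (ball x r)"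
    proof -
      have "emeasure lebesgue (ball (0::'a) 1) = ennreal (measure lebesgue (ball (0::'a) 1))"
        using fin1 by (intro emeasure_eq_ennreal_measure) simp
      hence "emeasure lebesgue (ball x r) = ennreal (r ^ DIM('a)) * ennreal (omega_n TYPE('a))"
        using emeasure_lebesgue_ball_conv_unit_ball[of r x] r unfolding omega_n_def by simp
      also have "\<dots> = ennreal (omega_n TYPE('a) * r ^ DIM('a))"
        using r by (simp add: ennreal_mult[symmetric] mult.commute omega_n_def)
      finally show ?thesis by simp
    qed
    also have "\<dots> = emeasure lebesgue (E \<inter> ball x r) + emeasure lebesgue (- E \<inter> ball x r)"
    proof -
      have "emeasure lebesgue (E \<inter> ball x r) + emeasure lebesgue (- E \<inter> ball x r) =
          emeasure lebesgue ((E \<inter> ball x r) \<union> (- E \<inter> ball x r))"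
        using Em by (intro plus_emeasure) auto
      moreover have "(E \<inter> ball x r) \<union> (- E \<inter> ball x r) = ball x r" by auto
      ultimately show ?thesis by simp
    qed
    finally have eq: "ennreal (omega_n TYPE('a) * r ^ DIM('a)) =
       emeasure lebesgue (E \<inter> ball x r) + emeasure lebesgue (- E \<inter> ball x r)" .
    have fin: "emeasure lebesgue (E \<inter> ball x r) \<noteq> \<infinity>"
    proof -
      have "emeasure lebesgue (E \<inter> ball x r) \<le> emeasure lebesgue (ball x r)"
        by (rule emeasure_mono) auto
      thus ?thesis using emeasure_lborel_ball_finite[of x r] by (auto simp: top_unique)
    qed
    have "emeasure lebesgue (E \<inter> ball x r) < ennreal (omega_n TYPE('a) * r ^ DIM('a))
       \<longleftrightarrow> 0 < emeasure lebesgue (- E \<inter> ball x r)"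
      unfolding eq using ennreal_add_left_cancel_less[of "emeasure lebesgue (E \<inter> ball x r)" 0] fin
      by simp
    moreover have "PsL s E (ball x r) > 0 \<longleftrightarrow>
       0 < emeasure lebesgue (E \<inter> ball x r) \<and> 0 < emeasure lebesgue (- E \<inter> ball x r)"
      unfolding PsL_def using Em assms(1) by (intro Ls_pos_iff) auto
    ultimately show ?thesis by blast
  qed
  show ?thesis unfolding meas_boundary_def using key by blast
qed

end
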